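(* Let $p$ be a prime and define $a\in{\mathbb F}_p(x,y,z)^{{\mathbb N}}$ by $$a(n)=(x+y+z)^n-(x+y)^n-(x+z)^n-(y+z)^n+x^n+y^n+z^n.$$ Then ${\mathcal Z}(a)=\{p^n\mid n\in{\mathbb N}\}\cup\{p^n+p^m\mid n,m\in{\mathbb N}\}$.
   Context: ${\mathbb N}=\{0,1,2,\dots\}$, ${\mathbb F}_p(x,y,z)$ is the rational function field in three variables over the field with $p$ elements, and ${\mathcal Z}(a)=\{n\in{\mathbb N}\mid a(n)=0\}$. *)

theory Defs
  imports "Berlekamp_Zassenhaus.Finite_Field" "HOL-Computational_Algebra.Fraction_Field"
begin

text \<open>The rational function field F_p(x,y,z) is realised as the fraction field of
  the polynomial ring F_p[x][y][z] (nested univariate polynomials), where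
  F_p = 'p mod_ring with CARD('p) = p prime.\<close>

type_synonym 'p ratfun3 = "'p mod_ring poly poly poly fract"

definition varX :: "'p::prime_card ratfun3" where
  "varX = Fract [:[:[:0, 1:]:]:] 1"

definition varY :: "'p::prime_card ratfun3" where
  "varY = Fract [:[:0, 1:]:] 1"

definition varZ :: "'p::prime_card ratfun3" where
  "varZ = Fract [:0, 1:] 1"

definition seq_a :: "nat \<Rightarrow> 'p::prime_card ratfun3" where
  "seq_a n = (varX + varY + varZ) ^ n - (varX + varY) ^ n - (varX + varZ) ^ n
             - (varY + varZ) ^ n + varX ^ n + varY ^ n + varZ ^ n"

definition zero_set :: "(nat \<Rightarrow> 'b::zero) \<Rightarrow> nat set" where
  "zero_set a = {n. a n = 0}"

end

theory Submission
  imports Defs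
begin

lemma frob:
  fixes a b :: "'a::comm_ring_1"
  assumes pr: "prime CHAR('a)"
  shows "(a + b) ^ CHAR('a) = a ^ CHAR('a) + b ^ CHAR('a)"
proof -
  let ?p = "CHAR('a)"
  let ?f = "\<lambda>k. of_nat (?p choose k) * a ^ k * b ^ (?p - k)"
  have p0: "?p \<noteq> 0" using pr by (auto simp: prime_gt_0_nat)
  have A: "{0..?p} = insert ?p (insert 0 ({0..?p} - {0} - {?p}))" by fastforce
  have s0: "sum ?f ({0..?p} - {0} - {?p}) = 0"
  proof (rule sum.neutral, rule)
    fix k assume k: "k \<in> {0..?p} - {0} - {?p}"
    have "?p dvd (?p choose k)"
      by (rule dvd_choose_prime) (use k pr p0 in auto)
    hence "(of_nat (?p choose k) :: 'a) = 0" by (simp add: of_nat_eq_0_iff_char_dvd)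
    thus "?f k = 0" by simp
  qed
  have "(a + b) ^ ?p = sum ?f {0..?p}"
    unfolding binomial_ring by (rule sum.cong) auto
  also have "\<dots> = sum ?f (insert ?p (insert 0 ({0..?p} - {0} - {?p})))"
    using A by metis
  also have "\<dots> = ?f ?p + ?f 0 + sum ?f ({0..?p} - {0} - {?p})"
    using p0 by (simp add: add.assoc)
  also have "\<dots> = a ^ ?p + b ^ ?p" using s0 p0 by simp
  finally show ?thesis .
qed

lemma frob_pow:
  fixes a b :: "'a::comm_ring_1"
  assumes pr: "prime CHAR('a)"
  shows "(a + b) ^ (CHAR('a) ^ e) = a ^ (CHAR('a) ^ e) + b ^ (CHAR('a) ^ e)"
proof (induction e)
  case 0 then show ?case by simp
next
  case (Suc e)
  have "(a + b) ^ (CHAR('a) ^ Suc e) = ((a + b) ^ (CHAR('a) ^ e)) ^ CHAR('a)"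
    by (simp add: power_mult[symmetric] mult.commute)
  also have "\<dots> = (a ^ (CHAR('a) ^ e)) ^ CHAR('a) + (b ^ (CHAR('a) ^ e)) ^ CHAR('a)"
    using Suc frob[OF pr] by simp
  also have "\<dots> = a ^ (CHAR('a) ^ Suc e) + b ^ (CHAR('a) ^ Suc e)"
    by (simp add: power_mult[symmetric] mult.commute)
  finally show ?case .
qed

lemma lucas_lite:
  fixes dummy :: "'a::comm_ring_1"
  assumes pr: "prime CHAR('a)" and le: "CHAR('a) ^ e \<le> n"
  shows "(of_nat (n choose (CHAR('a) ^ e)) :: 'a) = of_nat (n div CHAR('a) ^ e)"
proof -
  define N where "N = CHAR('a) ^ e"
  define q where "q = n div N"
  define r where "r = n mod N"
  have N0: "N > 0" unfolding N_def using pr by (simp add: prime_gt_0_nat)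
  have rN: "r < N" unfolding r_def using N0 by simp
  have nqr: "n = N * q + r" unfolding q_def r_def by simp
  define P :: "'a poly" where "P = [:1, 1:]"
  have prP: "prime CHAR('a poly)" using pr by simp
  have PN: "P ^ N = 1 + monom 1 N"
  proof -
    have "P = 1 + monom 1 1" unfolding P_def by (simp add: monom_Suc one_pCons)
    hence "P ^ N = 1 ^ N + (monom 1 1) ^ N" unfolding N_def
      using frob_pow[OF prP, of 1 "monom 1 1" e] by simp
    thus ?thesis by (simp add: monom_power)
  qed
  have Aform: "\<exists>C. (1 + monom (1::'a) N) ^ k = 1 + of_nat k * monom 1 N + monom 1 N * (monom 1 N * C)" for k
  proof (induction k)
    case 0 show ?case by (rule exI[of _ 0]) simp
  next
    case (Suc k)
    then obtain C where C: "(1 + monom (1::'a) N) ^ k = 1 + of_nat k * monom 1 N + monom 1 N * (monom 1 N * C)" by blast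
    show ?case
      by (rule exI[of _ "of_nat k + C + monom 1 N * C"]) (simp add: C algebra_simps)
  qed
  then obtain C where C: "(1 + monom (1::'a) N) ^ q = 1 + of_nat q * monom 1 N + monom 1 N * (monom 1 N * C)" by blast
  define B where "B = P ^ r"
  have B0: "coeff B 0 = 1" unfolding B_def P_def using coeff_linear_poly_power[of 0 r "1::'a" 1] by simp
  have BN: "coeff B N = 0"
  proof -
    have d1: "degree P \<le> 1" unfolding P_def by (simp add: degree_pCons_le)
    have "degree B \<le> degree P * r" unfolding B_def by (rule degree_power_le)
    also have "\<dots> \<le> r" using d1 mult_le_mono1[OF d1, of r] by simp
    finally have "degree B \<le> r" .
    thus ?thesis using rN by (simp add: coeff_eq_0)
  qed
  have "P ^ n = (P ^ N) ^ q * B" unfolding B_def by (simp add: nqr power_add power_mult)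
  also have "\<dots> = B + monom 1 N * (of_nat q * B + monom 1 N * (C * B))"
    unfolding PN C by (simp add: algebra_simps)
  finally have Pn: "P ^ n = B + monom 1 N * (of_nat q * B + monom 1 N * (C * B))" .
  have "coeff (P ^ n) N = of_nat (n choose N)" unfolding P_def
    using coeff_linear_poly_power[of N n "1::'a" 1] le N_def by simp
  moreover have "coeff (P ^ n) N = of_nat q"
    unfolding Pn using BN B0 N0 by (simp add: coeff_monom_mult coeff_mult_0 of_nat_poly)
  ultimately show ?thesis unfolding q_def N_def by simp
qed

lemma frob_pow':
  fixes a b :: "'a::comm_ring_1"
  assumes "CHAR('a) = p" "prime p"
  shows "(a + b) ^ (p ^ e) = a ^ (p ^ e) + b ^ (p ^ e)"
  using frob_pow[of a b e] assms by simp

definition X3 :: "'p::prime_card mod_ring poly poly poly" where "X3 = [:[:[:0, 1:]:]:]"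
definition Y3 :: "'p::prime_card mod_ring poly poly poly" where "Y3 = [:[:0, 1:]:]"
definition Z3 :: "'p::prime_card mod_ring poly poly poly" where "Z3 = [:0, 1:]"

definition AA :: "nat \<Rightarrow> 'p::prime_card mod_ring poly poly poly" where
  "AA n = (X3 + Y3 + Z3) ^ n - (X3 + Y3) ^ n - (X3 + Z3) ^ n
             - (Y3 + Z3) ^ n + X3 ^ n + Y3 ^ n + Z3 ^ n"

definition BB :: "nat \<Rightarrow> 'p::prime_card mod_ring poly poly" where
  "BB m = ([:[:0, 1:]:] + [:0, 1:]) ^ m - [:[:0, 1:]:] ^ m - [:0, 1:] ^ m"

lemma Fract_pow: "Fract (a::'a::idom) 1 ^ n = Fract (a ^ n) 1"
  by (induct n) (simp_all add: One_fract_def)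

lemma seq_a_AA: "seq_a n = Fract (AA n) 1"
  unfolding seq_a_def AA_def varX_def varY_def varZ_def X3_def Y3_def Z3_def
  by (simp add: Fract_pow)

lemma seq_a_zero_iff: "(seq_a n :: 'p::prime_card ratfun3) = 0 \<longleftrightarrow> (AA n :: 'p mod_ring poly poly poly) = 0"
  unfolding seq_a_AA Zero_fract_def by (simp add: eq_fract)

lemma coeff_const_pow: "k > 0 \<Longrightarrow> coeff ([:c::'a::comm_semiring_1:] ^ n) k = 0"
proof -
  assume k: "k > 0"
  have "[:c:] ^ n = [:c ^ n:]" by (induct n) (auto simp: mult.commute)
  thus ?thesis using k by (simp add: coeff_pCons split: nat.split)
qed

lemma coeff_x_pow: "k < n \<Longrightarrow> coeff ([:0, 1::'a::comm_semiring_1:] ^ n) k = 0"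
  using coeff_linear_poly_power[of k n "0::'a" 1] by (simp add: power_0_left)

lemma coeff_AA:
  assumes "0 < k" "k < n"
  shows "coeff (AA n) k = of_nat (n choose k) * BB (n - k)"
proof -
  have e1: "X3 + Y3 + Z3 = [:[:[:0, 1:]:] + [:0, 1:], 1:]" unfolding X3_def Y3_def Z3_def by simp
  have e2: "X3 + Y3 = [:[:[:0, 1:]:] + [:0, 1:]:]" unfolding X3_def Y3_def by simp
  have e3: "X3 + Z3 = [:[:[:0, 1:]:], 1:]" unfolding X3_def Z3_def by simp
  have e4: "Y3 + Z3 = [:[:0, 1:], 1:]" unfolding Y3_def Z3_def by simp
  show ?thesis
    unfolding AA_def e1 e2 e3 e4 BB_def
    using assms
    by (simp add: coeff_linear_poly_power coeff_const_pow coeff_x_pow X3_def Y3_def Z3_def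
       algebra_simps)
qed

lemma coeff_BB:
  assumes "0 < i" "i < m"
  shows "coeff (BB m) i = of_nat (m choose i) * [:0, 1:] ^ (m - i)"
  unfolding BB_def using assms
  by (simp add: coeff_linear_poly_power coeff_const_pow coeff_x_pow algebra_simps)

lemma AA_zero_if:
  assumes "n \<in> {CARD('p) ^ n | n. True} \<union> {CARD('p) ^ n + CARD('p) ^ m | n m. True}"
  shows "(AA n :: 'p::prime_card mod_ring poly poly poly) = 0"
proof -
  let ?p = "CARD('p)"
  have ch: "CHAR('p mod_ring poly poly poly) = ?p" by simp
  have pr: "prime ?p" by (rule prime_card)
  note F = frob_pow'[OF ch pr]
  from assms show ?thesis
  proof
    assume "n \<in> {?p ^ n | n. True}"
    then obtain e where n: "n = ?p ^ e" by blast
    show ?thesis unfolding AA_def n F by simp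
  next
    assume "n \<in> {?p ^ n + ?p ^ m | n m. True}"
    then obtain e f where n: "n = ?p ^ e + ?p ^ f" by blast
    show ?thesis unfolding AA_def n power_add F by (simp add: algebra_simps)
  qed
qed

lemma top_digit:
  fixes p n :: nat
  assumes "prime p" "n \<ge> 1"
  obtains e where "p ^ e \<le> n" "n < p ^ Suc e" "\<not> p dvd (n div p ^ e)"
proof -
  have p2: "p \<ge> 2" using assms prime_ge_2_nat by blast
  obtain e where e: "p ^ e \<le> n" "n < p ^ (e + 1)" using ex_power_ivl1[OF p2 assms(2)] by blast
  have pe: "p ^ e > 0" using p2 by simp
  have d1: "n div p ^ e \<ge> 1" using e pe by (simp add: div_greater_zero_iff Suc_le_eq)
  have d2: "n div p ^ e < p" using e pe by (simp add: div_less_iff_less_mult mult.commute)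
  have "\<not> p dvd (n div p ^ e)" using d1 d2 by (auto dest: dvd_imp_le)
  thus ?thesis using that e by simp
qed

lemma AA_nonzero:
  assumes "n \<notin> {CARD('p) ^ n | n. True} \<union> {CARD('p) ^ n + CARD('p) ^ m | n m. True}"
  shows "(AA n :: 'p::prime_card mod_ring poly poly poly) \<noteq> 0"
proof (cases "n = 0")
  case True
  then show ?thesis unfolding AA_def by simp
next
  case False
  let ?p = "CARD('p)"
  have pr: "prime ?p" by (rule prime_card)
  have chF: "CHAR('p mod_ring) = ?p" by simp
  obtain e where e: "?p ^ e \<le> n" "n < ?p ^ Suc e" "\<not> ?p dvd (n div ?p ^ e)"
    using top_digit[OF pr, of n] False by auto
  define k where "k = ?p ^ e"
  have kn: "k < n" using e(1) assms unfolding k_def by (cases "?p ^ e = n") auto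
  have k0: "0 < k" unfolding k_def using pr prime_gt_0_nat by simp
  define m where "m = n - k"
  have m1: "m \<ge> 1" using kn unfolding m_def by simp
  obtain f where f: "?p ^ f \<le> m" "m < ?p ^ Suc f" "\<not> ?p dvd (m div ?p ^ f)"
    using top_digit[OF pr m1] by auto
  define i where "i = ?p ^ f"
  have im: "i < m"
  proof -
    have "i \<noteq> m"
    proof
      assume "i = m"
      hence "n = ?p ^ e + ?p ^ f" unfolding i_def m_def k_def using kn k_def by simp
      thus False using assms by blast
    qed
    thus ?thesis using f(1) unfolding i_def by simp
  qed
  have i0: "0 < i" unfolding i_def using pr prime_gt_0_nat by simp
  have c1: "\<not> ?p dvd (n choose k)"
  proof
    assume "?p dvd (n choose k)"
    hence "(of_nat (n choose k) :: 'p mod_ring) = 0" by (simp add: of_nat_eq_0_iff_char_dvd)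
    hence "(of_nat (n div ?p ^ e) :: 'p mod_ring) = 0"
      using lucas_lite[of e n, where 'a = "'p mod_ring"] e(1) pr unfolding k_def chF by simp
    thus False using e(3) by (simp add: of_nat_eq_0_iff_char_dvd)
  qed
  have c2: "\<not> ?p dvd (m choose i)"
  proof
    assume "?p dvd (m choose i)"
    hence "(of_nat (m choose i) :: 'p mod_ring) = 0" by (simp add: of_nat_eq_0_iff_char_dvd)
    hence "(of_nat (m div ?p ^ f) :: 'p mod_ring) = 0"
      using lucas_lite[of f m, where 'a = "'p mod_ring"] f(1) pr unfolding i_def chF by simp
    thus False using f(3) by (simp add: of_nat_eq_0_iff_char_dvd)
  qed
  have "coeff (BB m :: 'p mod_ring poly poly) i \<noteq> 0"
    unfolding coeff_BB[OF i0 im] using c2 by (simp add: of_nat_eq_0_iff_char_dvd)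
  hence B: "(BB m :: 'p mod_ring poly poly) \<noteq> 0" by auto
  have "coeff (AA n :: 'p mod_ring poly poly poly) k \<noteq> 0"
    unfolding coeff_AA[OF k0 kn] m_def[symmetric] using B c1 by (simp add: of_nat_eq_0_iff_char_dvd)
  thus ?thesis by auto
qed

theorem proposition3p2:
  fixes p :: nat
  assumes "p = CARD('p::prime_card)"
  shows "zero_set (seq_a :: nat \<Rightarrow> 'p ratfun3)
           = {p ^ n | n. True} \<union> {p ^ n + p ^ m | n m. True}"
proof
  show "zero_set (seq_a :: nat \<Rightarrow> 'p ratfun3) \<subseteq> {p ^ n | n. True} \<union> {p ^ n + p ^ m | n m. True}"
  proof
    fix n assume "n \<in> zero_set (seq_a :: nat \<Rightarrow> 'p ratfun3)"
    hence "(AA n :: 'p mod_ring poly poly poly) = 0" unfolding zero_set_def using seq_a_zero_iff by auto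
    thus "n \<in> {p ^ n | n. True} \<union> {p ^ n + p ^ m | n m. True}"
      using AA_nonzero[where 'p='p, of n] assms by blast
  qed
next
  show "{p ^ n | n. True} \<union> {p ^ n + p ^ m | n m. True} \<subseteq> zero_set (seq_a :: nat \<Rightarrow> 'p ratfun3)"
  proof
    fix n assume "n \<in> {p ^ n | n. True} \<union> {p ^ n + p ^ m | n m. True}"
    hence "(AA n :: 'p mod_ring poly poly poly) = 0" using AA_zero_if[where 'p='p, of n] assms by blast
    thus "n \<in> zero_set (seq_a :: nat \<Rightarrow> 'p ratfun3)" unfolding zero_set_def using seq_a_zero_iff by auto
  qed
qed

end
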